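(* For all integers $n,k\ge1$, $$\frac{L_3(k)}{n^{(2k+1)/2}}<\sum_{t=k}^\infty\frac{g_{o,1}(t)}{n^{(2t+1)/2}}<\frac{U_3(k)}{n^{(2k+1)/2}},$$ where $L_3(k)=\left(\frac{19}{10}\alpha\sinh\alpha-\frac{109}{10}\cosh\alpha\sqrt{k+1}-\frac{23}{10\sqrt{k+1}}\right)24^{-(2k+1)/2}$ and $U_3(k)=\left(2\alpha\sinh\alpha+\frac{33}{10\sqrt{k+1}}\right)24^{-(2k+1)/2}$.
   Context: $\alpha=\pi/6$. $(a)_m=a(a+1)\cdots(a+m-1)$ is the rising factorial ($(a)_0=1$); $\binom{x}{m}=x(x-1)\cdots(x-m+1)/m!$ for $m\ge1$, $\binom{x}{0}=1$. For $t\ge2$, $$S_3(t)=\sum_{s=1}^t\frac{(1/2-s)_{s+1}\binom{-3/2}{t-s}}{s}\sum_{u=1}^s\frac{(-1)^u(-s)_u}{(s+u)!\,(2u-1)!}\left(\frac{\pi^2}{36}\right)^u,$$ and $g_{o,1}(t)=-\frac{6}{\pi\sqrt{24}}\frac{(-1)^t}{24^t}\left(\binom{-3/2}{t}+S_3(t)\right)$ for $t\ge2$, $g_{o,1}(1)=-\frac{432+\pi^2}{2304\sqrt6\,\pi}$, $g_{o,1}(0)=-\frac{6}{\pi\sqrt{24}}$. *)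

theory Defs
  imports Complex_Main
begin

definition alpha :: real where "alpha = pi / 6"

definition S3 :: "nat \<Rightarrow> real" where
  "S3 t = (\<Sum>s=1..t. pochhammer (1/2 - real s) (s+1) * ((-3/2) gchoose (t - s)) / real s *
      (\<Sum>u=1..s. (-1)^u * pochhammer (- real s) u / (fact (s+u) * fact (2*u-1)) * (pi^2/36)^u))"

definition g_o1 :: "nat \<Rightarrow> real" where
  "g_o1 t = (if t = 0 then - 6 / (pi * sqrt 24)
             else if t = 1 then - (432 + pi^2) / (2304 * sqrt 6 * pi)
             else - 6 / (pi * sqrt 24) * ((-1)^t / 24^t) * (((-3/2) gchoose t) + S3 t))"

definition L3 :: "nat \<Rightarrow> real" where
  "L3 k = (19/10 * alpha * sinh alpha - 109/10 * cosh alpha * sqrt (real k + 1)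
           - 23 / (10 * sqrt (real k + 1))) * 24 powr (- (2 * real k + 1) / 2)"

definition U3 :: "nat \<Rightarrow> real" where
  "U3 k = (2 * alpha * sinh alpha + 33 / (10 * sqrt (real k + 1))) * 24 powr (- (2 * real k + 1) / 2)"

end

theory Submission
  imports Defs
begin

definition Qb :: "nat \<Rightarrow> real" where "Qb m = pochhammer (3/2) m / fact m"

lemma Qb_gchoose: "(-3/2 :: real) gchoose m = (-1)^m * Qb m"
  unfolding Qb_def gbinomial_pochhammer by simp

lemma Qb_Suc: "Qb (Suc m) = Qb m * (real m + 3/2) / (real m + 1)"
  unfolding Qb_def by (simp add: pochhammer_Suc field_simps)

lemma Qb_pos: "Qb m > 0"
  unfolding Qb_def by (simp add: pochhammer_pos)

lemma Qb_mono: "Qb m \<le> Qb (m + i)"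
proof (induction i)
  case (Suc i)
  have "Qb (m+i) \<le> Qb (Suc (m+i))" using Qb_pos[of "m+i"] unfolding Qb_Suc
    by (simp add: field_simps)
  then show ?case using Suc by simp
qed simp

lemma Qb_grow: "Qb (k + i) \<le> Qb k * (3/2)^i"
proof (induction i)
  case (Suc i)
  have "Qb (Suc (k+i)) \<le> Qb (k+i) * (3/2)" using Qb_pos[of "k+i"] unfolding Qb_Suc
    by (simp add: field_simps)
  then show ?case using Suc by (simp add: mult_right_mono)
qed simp

lemma Qb_sq: "(Qb k)^2 \<le> (4 * real k + 3) / 3"
proof (induction k)
  case 0 then show ?case by (simp add: Qb_def)
next
  case (Suc k)
  have "(Qb (Suc k))^2 = (Qb k)^2 * (real k + 3/2)^2 / (real k + 1)^2"
    unfolding Qb_Suc by (simp add: power_mult_distrib power_divide)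
  also have "\<dots> \<le> (4 * real k + 3) / 3 * (real k + 3/2)^2 / (real k + 1)^2"
    using Suc by (intro divide_right_mono mult_right_mono) auto
  also have "\<dots> = ((4*real k+3)*(real k+3/2)^2) / (3*(real k+1)^2)" by simp
  also have "\<dots> \<le> ((4*real k+7)*(real k+1)^2) / (3*(real k+1)^2)"
    by (intro divide_right_mono) (simp_all add: power2_eq_square algebra_simps)
  also have "\<dots> = (4 * real (Suc k) + 3) / 3" by simp
  finally show ?case .
qed

lemma Qb_le: "Qb k \<le> 2 * sqrt (real k + 1)"
proof -
  have "Qb k = sqrt ((Qb k)^2)" using Qb_pos[of k] by simp
  also have "\<dots> \<le> sqrt (4*(real k+1))" using Qb_sq[of k] by (intro real_sqrt_le_mono) simp
  also have "\<dots> = 2*sqrt(real k+1)" by (subst real_sqrt_mult) simp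
  finally show ?thesis .
qed


definition R :: "nat \<Rightarrow> real" where "R s = pochhammer (1/2) s / fact s"

lemma R_nonneg: "R s \<ge> 0"
  unfolding R_def by (simp add: pochhammer_pos less_imp_le)

lemma R_Suc: "R (Suc s) = R s * (real s + 1/2) / (real s + 1)"
  unfolding R_def by (simp add: pochhammer_Suc field_simps)

lemma R_diff: "R s - R (Suc s) = pochhammer (1/2) s / (2 * fact (Suc s))"
proof -
  have "R s - R (Suc s) = R s / (2 * (real s + 1))" unfolding R_Suc by (simp add: field_simps)
  also have "\<dots> = pochhammer (1/2) s / (2 * fact (Suc s))" unfolding R_def fact_Suc
    by (simp add: field_simps)
  finally show ?thesis .
qed

lemma R_tele: "(\<Sum>s=1..t. R s - R (Suc s)) = R 1 - R (Suc t)"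
  by (induction t) (simp_all add: atLeastAtMostSuc_conv)

lemma R_1: "R 1 = 1/2" unfolding R_def by simp

lemma Pa: "pochhammer (1/2 - real s) (s+1) = (-1)^s * (pochhammer (1/2) s / 2 :: real)"
proof -
  have "pochhammer (1/2 - real s) (s+1) = pochhammer (- (real s - 1/2)) (s+1)" by simp
  also have "\<dots> = (-1)^(s+1) * pochhammer (real s - 1/2 - real (s+1) + 1) (s+1)"
    by (rule pochhammer_minus)
  also have "real s - 1/2 - real (s+1) + 1 = - 1/2" by simp
  also have "pochhammer (-1/2 :: real) (s+1) = (-1/2) * pochhammer (1/2) s"
    by (simp add: pochhammer_rec)
  finally show ?thesis by simp
qed

definition q :: "nat \<Rightarrow> nat \<Rightarrow> real" where "q s u = (-1)^u * pochhammer (- real s) u"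

lemma q_Suc: "q s (Suc u) = q s u * (real s - real u)"
  unfolding q_def by (simp add: pochhammer_Suc algebra_simps)

lemma q_bound: "1 \<le> u \<Longrightarrow> u \<le> s \<Longrightarrow> 0 \<le> q s u / fact (s+u) \<and> q s u / fact (s+u) \<le> real s / fact (s+1)"
proof (induction u)
  case 0 then show ?case by simp
next
  case (Suc u)
  show ?case
  proof (cases "u = 0")
    case True then show ?thesis by (simp add: q_def)
  next
    case False
    then have IH: "0 \<le> q s u / fact (s+u) \<and> q s u / fact (s+u) \<le> real s / fact (s+1)"
      using Suc by simp
    have eq: "q s (Suc u) / fact (s + Suc u) = q s u / fact (s+u) * ((real s - real u) / (real s + real u + 1))"
      unfolding q_Suc by (simp add: field_simps)
    have f0: "0 \<le> (real s - real u) / (real s + real u + 1)" using Suc.prems by simp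
    have f1: "(real s - real u) / (real s + real u + 1) \<le> 1" by (simp add: divide_le_eq)
    have "q s u / fact (s+u) * ((real s - real u) / (real s + real u + 1)) \<le> q s u / fact (s+u) * 1"
      using IH f1 by (intro mult_left_mono) auto
    moreover have "0 \<le> q s u / fact (s+u) * ((real s - real u) / (real s + real u + 1))"
      using IH f0 by (intro mult_nonneg_nonneg) auto
    ultimately show ?thesis using IH unfolding eq by linarith
  qed
qed

definition inner :: "nat \<Rightarrow> real" where
  "inner s = (\<Sum>u=1..s. (-1)^u * pochhammer (- real s) u / (fact (s+u) * fact (2*u-1)) * (pi^2/36)^u)"

lemma geo_half: "(\<Sum>u=1..s. (1/2::real)^u) \<le> 1"
proof -
  have "(\<Sum>u=1..s. (1/2::real)^u) = 1 - (1/2)^s"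
    by (induction s) (simp_all add: atLeastAtMostSuc_conv)
  then show ?thesis by simp
qed

lemma x_bounds: "0 \<le> pi^2/36" "pi^2/36 \<le> (1/2::real)"
proof -
  show "0 \<le> pi^2/36" by simp
  have "pi^2 \<le> 4^2" using pi_less_4 pi_gt_zero by (intro power_mono) auto
  then show "pi^2/36 \<le> (1/2::real)" by simp
qed

lemma inner_bounds: "0 \<le> inner s" "inner s \<le> real s / fact (s+1)"
proof -
  let ?x = "pi^2/36 :: real"
  have tm: "0 \<le> (-1)^u * pochhammer (- real s) u / (fact (s+u) * fact (2*u-1)) * ?x^u
    \<and> (-1)^u * pochhammer (- real s) u / (fact (s+u) * fact (2*u-1)) * ?x^u \<le> real s / fact (s+1) * (1/2)^u"
    if u: "u \<in> {1..s}" for u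
  proof -
    from u q_bound[of u s] have qb: "0 \<le> q s u / fact (s+u)" "q s u / fact (s+u) \<le> real s / fact (s+1)" by auto
    have eq: "(-1)^u * pochhammer (- real s) u / (fact (s+u) * fact (2*u-1)) * ?x^u
       = q s u / fact (s+u) * (?x^u / fact (2*u-1))" unfolding q_def by (simp add: field_simps)
    have a: "0 \<le> ?x^u / fact (2*u-1)" by simp
    have "?x^u / fact (2*u-1) \<le> ?x^u" by (simp add: divide_le_eq_1 field_simps)
    also have "?x^u \<le> (1/2)^u" using x_bounds by (intro power_mono) auto
    finally have b: "?x^u / fact (2*u-1) \<le> (1/2)^u" .
    have "q s u / fact (s+u) * (?x^u / fact (2*u-1)) \<le> real s / fact (s+1) * (1/2)^u"
      using qb a b by (intro mult_mono) auto
    moreover have "0 \<le> q s u / fact (s+u) * (?x^u / fact (2*u-1))" using qb(1) a by (rule mult_nonneg_nonneg)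
    ultimately show ?thesis unfolding eq by linarith
  qed
  show "0 \<le> inner s" unfolding inner_def using tm by (intro sum_nonneg) blast
  have "inner s \<le> (\<Sum>u=1..s. real s / fact (s+1) * (1/2)^u)"
    unfolding inner_def using tm by (intro sum_mono) blast
  also have "\<dots> = real s / fact (s+1) * (\<Sum>u=1..s. (1/2)^u)" by (simp add: sum_distrib_left)
  also have "\<dots> \<le> real s / fact (s+1) * 1" using geo_half[of s] by (intro mult_left_mono) auto
  finally show "inner s \<le> real s / fact (s+1)" by simp
qed


lemma S3_eq: "S3 t = (\<Sum>s=1..t. pochhammer (1/2 - real s) (s+1) * ((-3/2) gchoose (t - s)) / real s * inner s)"
  unfolding S3_def inner_def by simp

lemma S3_bounds: "0 \<le> (-1)^t * S3 t" "(-1)^t * S3 t \<le> Qb t / 2"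
proof -
  define T where "T s = pochhammer (1/2) s / 2 * Qb (t-s) / real s * inner s" for s
  have eqs: "(-1)^t * (pochhammer (1/2 - real s) (s+1) * ((-3/2) gchoose (t - s)) / real s * inner s) = T s"
    if "s \<in> {1..t}" for s
  proof -
    from that have st: "s + (t - s) = t" by auto
    have sgn: "(-1::real)^t * ((-1)^s * (-1)^(t-s)) = 1"
      by (simp add: power_add[symmetric] st flip: power_mult_distrib)
    have "(-1)^t * (pochhammer (1/2 - real s) (s+1) * ((-3/2) gchoose (t - s)) / real s * inner s)
      = ((-1::real)^t * ((-1)^s * (-1)^(t-s))) * T s"
      unfolding Pa Qb_gchoose T_def by (simp add: field_simps)
    then show ?thesis using sgn by simp
  qed
  have Tb: "0 \<le> T s \<and> T s \<le> Qb t * (R s - R (Suc s))" if "s \<in> {1..t}" for s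
  proof -
    from that have s1: "s \<ge> 1" and st: "s \<le> t" by auto
    have P0: "0 \<le> pochhammer (1/2::real) s / 2" by (simp add: pochhammer_pos less_imp_le)
    have Q0: "0 \<le> Qb (t-s)" using Qb_pos less_imp_le by blast
    have Qm: "Qb (t-s) \<le> Qb t" using Qb_mono[of "t-s" s] st by simp
    have I0: "0 \<le> inner s" "inner s \<le> real s / fact (s+1)" using inner_bounds by auto
    have eqT: "T s = (pochhammer (1/2) s / 2 / real s) * (Qb (t-s) * inner s)"
      unfolding T_def by (simp add: field_simps)
    have A0: "0 \<le> pochhammer (1/2::real) s / 2 / real s" using P0 by simp
    have "Qb (t-s) * inner s \<le> Qb t * (real s / fact (s+1))"
      using Qm I0 Q0 by (intro mult_mono) auto
    then have "T s \<le> (pochhammer (1/2) s / 2 / real s) * (Qb t * (real s / fact (s+1)))"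
      unfolding eqT using A0 by (intro mult_left_mono) auto
    also have "\<dots> = Qb t * (R s - R (Suc s))"
    proof -
      have sp: "real s \<noteq> 0" using s1 by simp
      show ?thesis unfolding R_diff using sp by (simp add: field_simps del: fact_Suc)
    qed
    finally have up: "T s \<le> Qb t * (R s - R (Suc s))" .
    have "0 \<le> T s" unfolding eqT using A0 Q0 I0 by (intro mult_nonneg_nonneg) auto
    with up show ?thesis by simp
  qed
  have sum_eq: "(-1)^t * S3 t = (\<Sum>s=1..t. T s)"
    unfolding S3_eq sum_distrib_left using eqs by (intro sum.cong) auto
  show "0 \<le> (-1)^t * S3 t" unfolding sum_eq using Tb by (intro sum_nonneg) blast
  have "(\<Sum>s=1..t. T s) \<le> (\<Sum>s=1..t. Qb t * (R s - R (Suc s)))"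
    using Tb by (intro sum_mono) blast
  also have "\<dots> = Qb t * (\<Sum>s=1..t. R s - R (Suc s))" by (simp add: sum_distrib_left)
  also have "\<dots> = Qb t * (R 1 - R (Suc t))" by (simp only: R_tele)
  also have "\<dots> \<le> Qb t * R 1" using Qb_pos[of t] R_nonneg[of "Suc t"] by (intro mult_left_mono) auto
  finally show "(-1)^t * S3 t \<le> Qb t / 2" unfolding sum_eq R_1 by simp
qed

lemma g_bounds:
  assumes "t \<ge> 1"
  shows "g_o1 t \<le> 0" "- g_o1 t \<le> 9 / (pi * sqrt 24) * Qb t / 24^t"
proof -
  have "g_o1 t \<le> 0 \<and> - g_o1 t \<le> 9 / (pi * sqrt 24) * Qb t / 24^t"
  proof (cases "t = 1")
    case True
    have s24: "sqrt 24 = 2 * sqrt (6::real)"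
      using real_sqrt_mult[of 4 6] by simp
    have pi2: "pi^2 \<le> (16::real)"
    proof -
      have "pi^2 \<le> (4::real)^2" using pi_less_4 pi_gt_zero by (intro power_mono) auto
      then show ?thesis by simp
    qed
    have q1: "Qb 1 = 3/2" by (simp add: Qb_def)
    define X where "X = (432 + pi^2) / (2304 * sqrt 6 * pi)"
    have e1: "g_o1 t = - X" unfolding X_def using True by (simp add: g_o1_def minus_divide_left)
    have e2: "9 / (pi * sqrt 24) * Qb t / 24^t = 648 / (2304 * sqrt 6 * pi)"
      unfolding True s24 using q1 by (simp add: field_simps)
    have e3: "X \<le> 648 / (2304 * sqrt 6 * pi)"
      unfolding X_def using pi2 by (intro divide_right_mono) auto
    have e4: "0 \<le> X" unfolding X_def by simp
    show ?thesis using e1 e2 e3 e4 by linarith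
  next
    case False
    with assms have t2: "t \<ge> 2" by simp
    define W where "W = Qb t + (-1)^t * S3 t"
    have g: "g_o1 t = - (6 / (pi * sqrt 24)) / 24^t * W"
    proof -
      have "g_o1 t = - 6 / (pi * sqrt 24) * ((-1)^t / 24^t) * (((-3/2) gchoose t) + S3 t)"
        using t2 by (simp add: g_o1_def)
      also have "\<dots> = - (6 / (pi * sqrt 24)) / 24^t * ((-1)^t * ((-3/2) gchoose t) + (-1)^t * S3 t)"
        by (simp add: field_simps)
      also have "(-1)^t * ((-3/2) gchoose t) = Qb t"
        unfolding Qb_gchoose by (simp flip: power_mult_distrib)
      finally show ?thesis unfolding W_def .
    qed
    have W0: "0 \<le> W" unfolding W_def using S3_bounds[of t] Qb_pos[of t] by simp
    have W1: "W \<le> 3/2 * Qb t" unfolding W_def using S3_bounds[of t] by simp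
    have c0: "0 \<le> 6 / (pi * sqrt 24) / 24^t" by simp
    have "g_o1 t \<le> 0" unfolding g using c0 W0 by (simp add: mult_nonneg_nonneg)
    moreover have "- g_o1 t \<le> 6 / (pi * sqrt 24) / 24^t * (3/2 * Qb t)"
    proof -
      have "- g_o1 t = 6 / (pi * sqrt 24) / 24^t * W" unfolding g by simp
      also have "\<dots> \<le> 6 / (pi * sqrt 24) / 24^t * (3/2 * Qb t)" by (rule mult_left_mono[OF W1 c0])
      finally show ?thesis .
    qed
    moreover have "6 / (pi * sqrt 24) / 24^t * (3/2 * Qb t) = 9 / (pi * sqrt 24) * Qb t / 24^t"
      by (simp add: field_simps)
    ultimately show ?thesis by linarith
  qed
  then show "g_o1 t \<le> 0" "- g_o1 t \<le> 9 / (pi * sqrt 24) * Qb t / 24^t" by auto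
qed


lemma pow24: "(24::real) powr (- (2 * real k + 1) / 2) = 1 / (24^k * sqrt 24)"
proof -
  have "(24::real) powr (- (2 * real k + 1) / 2) = 24 powr (- (real k + 1/2))"
    by (rule arg_cong[of _ _ "\<lambda>x. (24::real) powr x"]) (simp add: field_simps)
  also have "\<dots> = inverse (24 powr (real k + 1/2))" by (rule powr_minus)
  also have "24 powr (real k + 1/2) = (24::real) powr real k * 24 powr (1/2)" by (rule powr_add)
  also have "(24::real) powr real k = 24^k" by (simp add: powr_realpow)
  also have "(24::real) powr (1/2) = sqrt 24" by (simp add: powr_half_sqrt)
  finally show ?thesis by (simp add: field_simps)
qed

lemma E_bound:
  fixes k :: nat
  defines "E \<equiv> 19/10 * alpha * sinh alpha - 109/10 * cosh alpha * sqrt (real k + 1)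
           - 23 / (10 * sqrt (real k + 1))"
  shows "E < - (48 / (5 * pi)) * Qb k"
proof -
  define sq where "sq = sqrt (real k + 1)"
  define ch where "ch = cosh alpha"
  define sh where "sh = sinh alpha"
  have sq1: "sq \<ge> 1" unfolding sq_def by simp
  have ch1: "ch \<ge> 1" unfolding ch_def by (rule cosh_real_ge_1)
  have a0: "alpha > 0" unfolding alpha_def by simp
  have a1: "alpha < 2/3" unfolding alpha_def using pi_less_4 by simp
  have shch: "sh < ch" unfolding sh_def ch_def by (rule sinh_less_cosh_real)
  have h1: "alpha * sh \<le> alpha * ch" using a0 shch by simp
  have bpos: "0 \<le> 109/10*sq - 19/10*alpha" using sq1 a1 by simp
  have h2: "1 * (109/10*sq - 19/10*alpha) \<le> ch * (109/10*sq - 19/10*alpha)"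
    using ch1 bpos by (rule mult_right_mono)
  have h3: "ch * (109/10*sq - 19/10*alpha) = 109/10*(ch*sq) - 19/10*(alpha*ch)" by (simp add: algebra_simps)
  have h4: "0 < 23 / (10 * sq)" using sq1 by simp
  have Eeq: "E = 19/10*(alpha*sh) - 109/10*(ch*sq) - 23 / (10 * sq)"
    unfolding E_def sq_def ch_def sh_def by (simp add: algebra_simps)
  have h5: "109/10*sq - 19/10*alpha \<le> 109/10*(ch*sq) - 19/10*(alpha*ch)" using h2 h3 by simp
  have Em: "E < - (96/10) * sq" using Eeq h1 h5 h4 sq1 a1 by linarith
  have p: "48 / (5 * pi) \<le> 48/10" using pi_ge_two by (simp add: field_simps)
  have q: "Qb k \<le> 2 * sq" unfolding sq_def by (rule Qb_le)
  have "(48 / (5 * pi)) * Qb k \<le> 48/10 * (2*sq)"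
    using p q Qb_pos[of k] by (intro mult_mono) auto
  then show ?thesis using Em by linarith
qed

theorem mainTheorem18:
  fixes n k :: nat
  assumes "n \<ge> 1" and "k \<ge> 1"
  shows "summable (\<lambda>i. g_o1 (i + k) / real n powr ((2 * real (i + k) + 1) / 2))
    \<and> L3 k / real n powr ((2 * real k + 1) / 2)
        < (\<Sum>i. g_o1 (i + k) / real n powr ((2 * real (i + k) + 1) / 2))
    \<and> (\<Sum>i. g_o1 (i + k) / real n powr ((2 * real (i + k) + 1) / 2))
        < U3 k / real n powr ((2 * real k + 1) / 2)"
proof -
  define N where "N = real n powr ((2 * real k + 1) / 2)"
  define C where "C = 9 / (pi * sqrt 24)"
  define M where "M = C * Qb k / 24^k / N"
  define f where "f i = g_o1 (i + k) / real n powr ((2 * real (i + k) + 1) / 2)" for i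
  have n0: "real n \<ge> 1" using assms by simp
  have N0: "N > 0" unfolding N_def using n0 by simp
  have C0: "C \<ge> 0" unfolding C_def by simp
  have M0: "M \<ge> 0" unfolding M_def using C0 N0 Qb_pos[of k] by simp
  have pw: "real n powr ((2 * real (i + k) + 1) / 2) = real n ^ i * N" for i
  proof -
    have "real n powr ((2 * real (i + k) + 1) / 2) = real n powr (real i + (2 * real k + 1) / 2)"
      by (rule arg_cong[of _ _ "\<lambda>x. real n powr x"]) (simp add: field_simps)
    also have "\<dots> = real n powr real i * N" unfolding N_def by (rule powr_add)
    also have "real n powr real i = real n ^ i" using n0 by (simp add: powr_realpow)
    finally show ?thesis .
  qed
  have den: "real n ^ i * N \<ge> N" for i
  proof -
    have "1 \<le> real n ^ i" using n0 by simp
    then show ?thesis using N0 by (metis mult_right_mono mult_1 less_imp_le)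
  qed
  have fle0: "f i \<le> 0" for i
  proof -
    have "g_o1 (i+k) \<le> 0" using g_bounds(1)[of "i+k"] assms by simp
    moreover have "0 < real n ^ i * N" using N0 den[of i] by linarith
    ultimately show ?thesis unfolding f_def pw by (rule divide_nonpos_pos)
  qed
  have r16: "(1/16::real)^i = (3/2)^i / 24^i" for i
  proof -
    have "(1/16::real)^i = ((3/2)/24)^i" by simp
    also have "\<dots> = (3/2)^i / 24^i" by (rule power_divide)
    finally show ?thesis .
  qed
  have fge: "- (M * (1/16)^i) \<le> f i" for i
  proof -
    have a: "- g_o1 (i+k) \<le> C * Qb (i+k) / 24^(i+k)"
      using g_bounds(2)[of "i+k"] assms unfolding C_def by simp
    have b: "C * Qb (i+k) / 24^(i+k) \<le> C * (Qb k * (3/2)^i) / 24^(i+k)"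
      using Qb_grow[of k i] C0 by (intro divide_right_mono mult_left_mono) (auto simp: add.commute)
    have c: "C * (Qb k * (3/2)^i) / 24^(i+k) = M * N * (1/16)^i"
      unfolding M_def r16 using N0 by (simp add: power_add field_simps)
    have num0: "0 \<le> M * N * (1/16)^i" using M0 N0 by simp
    have "- f i = (- g_o1 (i+k)) / (real n ^ i * N)" unfolding f_def pw by simp
    also have "\<dots> \<le> (M * N * (1/16)^i) / (real n ^ i * N)"
      using a b c N0 den[of i] by (intro divide_right_mono) auto
    also have "\<dots> \<le> (M * N * (1/16)^i) / N"
    proof -
      have "0 < real n ^ i" using n0 by simp
      then have "0 < real n ^ i * N * N" using N0 by simp
      then show ?thesis by (rule divide_left_mono[OF den[of i] num0])
    qed
    also have "\<dots> = M * (1/16)^i" using N0 by simp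
    finally show ?thesis by simp
  qed
  have geo: "(\<lambda>i. M * (1/16::real)^i) sums (M * (16/15))"
  proof -
    have "(\<lambda>i. (1/16::real)^i) sums (1 / (1 - 1/16))" by (rule geometric_sums) simp
    then have "(\<lambda>i. M * (1/16::real)^i) sums (M * (1 / (1 - 1/16)))" by (rule sums_mult)
    then show ?thesis by simp
  qed
  have sg: "summable (\<lambda>i. M * (1/16::real)^i)" using geo by (rule sums_summable)
  have sf: "summable f"
  proof (rule summable_comparison_test)
    show "\<exists>N. \<forall>i\<ge>N. norm (f i) \<le> M * (1/16)^i"
    proof (intro exI[of _ 0] allI impI)
      fix i :: nat
      have "norm (f i) = - f i" using fle0[of i] by simp
      then show "norm (f i) \<le> M * (1/16)^i" using fge[of i] by linarith
    qed
    show "summable (\<lambda>i. M * (1/16::real)^i)" by (rule sg)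
  qed
  have lowsum: "- (M * (16/15)) \<le> suminf f"
  proof -
    have "(\<lambda>i. - (M * (1/16::real)^i)) sums (- (M * (16/15)))" using geo by (rule sums_minus)
    then have "suminf (\<lambda>i. - (M * (1/16::real)^i)) = - (M * (16/15))" by (rule sums_unique[symmetric])
    moreover have "suminf (\<lambda>i. - (M * (1/16::real)^i)) \<le> suminf f"
      using fge sf sg by (intro suminf_le) (auto intro: summable_minus)
    ultimately show ?thesis by simp
  qed
  have upsum: "suminf f \<le> 0"
  proof -
    have "suminf f \<le> suminf (\<lambda>i. 0::real)" using fle0 sf by (intro suminf_le) auto
    then show ?thesis by simp
  qed
  have U0: "U3 k > 0"
  proof -
    have "alpha > 0" unfolding alpha_def by simp
    then have "2 * alpha * sinh alpha \<ge> 0" by simp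
    moreover have "33 / (10 * sqrt (real k + 1)) > 0" by simp
    ultimately have "0 < 2 * alpha * sinh alpha + 33 / (10 * sqrt (real k + 1))" by linarith
    then show ?thesis unfolding U3_def by (intro mult_pos_pos) auto
  qed
  have "0 < U3 k / N" using U0 N0 by (rule divide_pos_pos)
  then have upper: "suminf f < U3 k / N" using upsum by linarith
  have L3eq: "L3 k = (19/10 * alpha * sinh alpha - 109/10 * cosh alpha * sqrt (real k + 1)
           - 23 / (10 * sqrt (real k + 1))) / (24^k * sqrt 24)"
    unfolding L3_def pow24 by simp
  have D0: "24^k * sqrt 24 > (0::real)" by simp
  have "L3 k < - (48 / (5 * pi)) * Qb k / (24^k * sqrt 24)"
    unfolding L3eq using E_bound[of k] D0 by (intro divide_strict_right_mono) auto
  also have "- (48 / (5 * pi)) * Qb k / (24^k * sqrt 24) = - (M * (16/15)) * N"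
    unfolding M_def C_def using N0 by (simp add: field_simps)
  finally have "L3 k / N < - (M * (16/15))" using N0 by (simp add: divide_less_eq)
  then have lower: "L3 k / N < suminf f" using lowsum by linarith
  show ?thesis using sf lower upper unfolding f_def N_def by simp
qed

end
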